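(* Let $L>0$, $N\in\mathbb{N}_+$, $h=L/N$, $\epsilon>0$, $\theta_0>0$, $\tau>0$, $\alpha\in(0,1)$, $\rho_u>0$, $\rho_w>0$, and let $u^n\in\mathcal{C}_{per}$ with $-1<u^n<1$ pointwise. Let $\{(u_1^{(k)},w_1^{(k)},u_2^{(k)},w_2^{(k)},u_3^{(k)},w_3^{(k)})\}_{k\ge0}$ be the sequence generated by Algorithm 1 (described in the context), and let $(u_1^*,w_1^*,u_2^*,w_2^*,u_3^*,w_3^* )$ be the stationary point of the Lagrange function $\mathcal{L}$ (described in the context). Then, as $k\to\infty$, $$\|u_i^{(k)}-u_i^*\|_2\to0\quad\text{and}\quad\|w_i^{(k)}-w_i^*\|_2\to0\qquad(i=1,2,3).$$
   Context: $\mathcal{C}_{per}$ is the space of real grid functions $\nu=(\nu_{i,j,k})_{i,j,k\in\mathbb{Z}}$ that are $N$-periodic in each index (values at cell centres of a uniform grid of mesh size $h$ on $(0,L)^3$). Inner product $\langle\nu,\xi\rangle=h^2\sum_{i,j,k=1}^N\nu_{i,j,k}\xi_{i,j,k}$, $\|\nu\|_2=\langle\nu,\nu\rangle^{1/2}$. Discrete Laplacian $(\Delta_h\nu)_{i,j,k}=h^{-2}(\nu_{i+1,j,k}+\nu_{i-1,j,k}+\nu_{i,j+1,k}+\nu_{i,j-1,k}+\nu_{i,j,k+1}+\nu_{i,j,k-1}-6\nu_{i,j,k})$; $\|\nabla_h\nu\|_2^2=\sum_{i,j,k=1}^N\big[(\nu_{i+1,j,k}-\nu_{i,j,k})^2+(\nu_{i,j+1,k}-\nu_{i,j,k})^2+(\nu_{i,j,k+1}-\nu_{i,j,k})^2\big]$.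 Operations and inequalities are pointwise; $1$ is the constant grid function. Lagrange function: $\mathcal{L}(u_1,w_1,u_2,w_2,u_3,w_3)=Z_1(u_1,w_1)+Z_2(u_2,w_2)+\langle u_3,u_1-u_2\rangle-\langle w_3,w_1-w_2\rangle$, with $Z_1(u,w)=\frac{\epsilon^2}{2}\|\nabla_hu\|_2^2-\alpha\langle u-u^n,w\rangle-\frac{\tau}{2}\|\nabla_hw\|_2^2$ and $Z_2(u,w)=\langle1+u,\log(1+u)\rangle+\langle1-u,\log(1-u)\rangle-\theta_0\langle u^n,u\rangle-(1-\alpha)\langle u-u^n,w\rangle$ (for $-1<u<1$). A stationary point is a tuple in $\mathcal{C}_{per}^6$ with $-1<u_2^*<1$ satisfying $-\epsilon^2\Delta_hu_1^*-\alpha w_1^*+u_3^*=0$, $\alpha(-u_1^*+u^n)+\tau\Delta_hw_1^*-w_3^*=0$, $\log(1+u_2^* )-\log(1-u_2^* )-\theta_0u^n-(1-\alpha)w_2^*-u_3^*=0$, $(1-\alpha)(-u_2^*+u^n)+w_3^*=0$, $u_1^*=u_2^*$, $w_1^*=w_2^*$. Algorithm 1: set $u_2^{(0)}=u^n$, $w_2^{(0)}=0$, $u_3^{(0)}=0$, $w_3^{(0)}=0$. For $k=0,1,2,\dots$: (i) find $u_1^{(k+1)},w_1^{(k+1)}\in\mathcal{C}_{per}$ solving $-\epsilon^2\Delta_hu_1^{(k+1)}-\alpha w_1^{(k+1)}+u_3^{(k)}+\rho_u(u_1^{(k+1)}-u_2^{(k)})=0$ and $\alpha(-u_1^{(k+1)}+u^n)+\tau\Delta_hw_1^{(k+1)}-w_3^{(k)}-\rho_w(w_1^{(k+1)}-w_2^{(k)})=0$;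 (ii) find $u_2^{(k+1)},w_2^{(k+1)}\in\mathcal{C}_{per}$ with $-1<u_2^{(k+1)}<1$ solving $\log(1+u_2^{(k+1)})-\log(1-u_2^{(k+1)})-\theta_0u^n-(1-\alpha)w_2^{(k+1)}-u_3^{(k)}-\rho_u(u_1^{(k+1)}-u_2^{(k+1)})=0$ and $(1-\alpha)(-u_2^{(k+1)}+u^n)+w_3^{(k)}+\rho_w(w_1^{(k+1)}-w_2^{(k+1)})=0$; (iii) set $u_3^{(k+1)}=u_3^{(k)}+\rho_u(u_1^{(k+1)}-u_2^{(k+1)})$, $w_3^{(k+1)}=w_3^{(k)}+\rho_w(w_1^{(k+1)}-w_2^{(k+1)})$. *)

theory Defs
  imports Complex_Main
begin

type_synonym grid = "int \<Rightarrow> int \<Rightarrow> int \<Rightarrow> real"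

definition per :: "nat \<Rightarrow> grid \<Rightarrow> bool" where
  "per N v \<longleftrightarrow> (\<forall>i j k. v (i + int N) j k = v i j k \<and> v i (j + int N) k = v i j k
                        \<and> v i j (k + int N) = v i j k)"

definition gip :: "real \<Rightarrow> nat \<Rightarrow> grid \<Rightarrow> grid \<Rightarrow> real" where
  "gip h N v x = h^2 * (\<Sum>i\<in>{1..int N}. \<Sum>j\<in>{1..int N}. \<Sum>k\<in>{1..int N}. v i j k * x i j k)"

definition gnorm :: "real \<Rightarrow> nat \<Rightarrow> grid \<Rightarrow> real" where
  "gnorm h N v = sqrt (gip h N v v)"

definition lap :: "real \<Rightarrow> grid \<Rightarrow> grid" where
  "lap h v = (\<lambda>i j k. (v (i+1) j k + v (i-1) j k + v i (j+1) k + v i (j-1) k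
                       + v i j (k+1) + v i j (k-1) - 6 * v i j k) / h^2)"

definition stationary ::
  "nat \<Rightarrow> real \<Rightarrow> real \<Rightarrow> real \<Rightarrow> real \<Rightarrow> real \<Rightarrow> grid \<Rightarrow>
   grid \<Rightarrow> grid \<Rightarrow> grid \<Rightarrow> grid \<Rightarrow> grid \<Rightarrow> grid \<Rightarrow> bool" where
  "stationary N h eps \<theta>0 \<tau> \<alpha> un u1 w1 u2 w2 u3 w3 \<longleftrightarrow>
     per N u1 \<and> per N w1 \<and> per N u2 \<and> per N w2 \<and> per N u3 \<and> per N w3 \<and>
     (\<forall>a b c. -1 < u2 a b c \<and> u2 a b c < 1) \<and>
     (\<forall>a b c. - (eps^2) * lap h u1 a b c - \<alpha> * w1 a b c + u3 a b c = 0) \<and>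
     (\<forall>a b c. \<alpha> * (- u1 a b c + un a b c) + \<tau> * lap h w1 a b c - w3 a b c = 0) \<and>
     (\<forall>a b c. ln (1 + u2 a b c) - ln (1 - u2 a b c) - \<theta>0 * un a b c
               - (1 - \<alpha>) * w2 a b c - u3 a b c = 0) \<and>
     (\<forall>a b c. (1 - \<alpha>) * (- u2 a b c + un a b c) + w3 a b c = 0) \<and>
     u1 = u2 \<and> w1 = w2"

definition algorithm1 ::
  "nat \<Rightarrow> real \<Rightarrow> real \<Rightarrow> real \<Rightarrow> real \<Rightarrow> real \<Rightarrow> real \<Rightarrow> real \<Rightarrow> grid \<Rightarrow>
   (nat \<Rightarrow> grid) \<Rightarrow> (nat \<Rightarrow> grid) \<Rightarrow> (nat \<Rightarrow> grid) \<Rightarrow> (nat \<Rightarrow> grid) \<Rightarrow>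
   (nat \<Rightarrow> grid) \<Rightarrow> (nat \<Rightarrow> grid) \<Rightarrow> bool" where
  "algorithm1 N h eps \<theta>0 \<tau> \<alpha> \<rho>u \<rho>w un u1 w1 u2 w2 u3 w3 \<longleftrightarrow>
     u2 0 = un \<and> w2 0 = (\<lambda>a b c. 0) \<and> u3 0 = (\<lambda>a b c. 0) \<and> w3 0 = (\<lambda>a b c. 0) \<and>
     (\<forall>k. per N (u1 (Suc k)) \<and> per N (w1 (Suc k)) \<and>
          (\<forall>a b c. - (eps^2) * lap h (u1 (Suc k)) a b c - \<alpha> * w1 (Suc k) a b c + u3 k a b c
                    + \<rho>u * (u1 (Suc k) a b c - u2 k a b c) = 0) \<and>
          (\<forall>a b c. \<alpha> * (- u1 (Suc k) a b c + un a b c) + \<tau> * lap h (w1 (Suc k)) a b c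
                    - w3 k a b c - \<rho>w * (w1 (Suc k) a b c - w2 k a b c) = 0) \<and>
          per N (u2 (Suc k)) \<and> per N (w2 (Suc k)) \<and>
          (\<forall>a b c. -1 < u2 (Suc k) a b c \<and> u2 (Suc k) a b c < 1) \<and>
          (\<forall>a b c. ln (1 + u2 (Suc k) a b c) - ln (1 - u2 (Suc k) a b c) - \<theta>0 * un a b c
                    - (1 - \<alpha>) * w2 (Suc k) a b c - u3 k a b c
                    - \<rho>u * (u1 (Suc k) a b c - u2 (Suc k) a b c) = 0) \<and>
          (\<forall>a b c. (1 - \<alpha>) * (- u2 (Suc k) a b c + un a b c) + w3 k a b c
                    + \<rho>w * (w1 (Suc k) a b c - w2 (Suc k) a b c) = 0) \<and>
          u3 (Suc k) = (\<lambda>a b c. u3 k a b c + \<rho>u * (u1 (Suc k) a b c - u2 (Suc k) a b c)) \<and>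
          w3 (Suc k) = (\<lambda>a b c. w3 k a b c + \<rho>w * (w1 (Suc k) a b c - w2 (Suc k) a b c)))"

end

theory Submission
  imports Defs
begin


lemma shift1:
  fixes f :: "int \<Rightarrow> real"
  assumes "\<And>i. f (i + int N) = f i"
  shows "(\<Sum>i\<in>{1..int N}. f (i+1)) = (\<Sum>i\<in>{1..int N}. f i)"
proof (cases "N = 0")
  case True then show ?thesis by simp
next
  case False
  have "(\<Sum>i\<in>{1..int N}. f (i+1)) = (\<Sum>i\<in>{2..int N+1}. f i)"
    by (rule sum.reindex_bij_witness[where i="\<lambda>i. i - 1" and j="\<lambda>i. i+1"]) auto
  also have "{2..int N+1} = insert (int N + 1) {2..int N}" using False by auto
  also have "(\<Sum>i\<in>insert (int N + 1) {2..int N}. f i) = f (int N + 1) + (\<Sum>i\<in>{2..int N}. f i)"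
    by simp
  also have "f (int N + 1) = f 1" using assms[of 1] by (simp add: add.commute)
  also have "f 1 + (\<Sum>i\<in>{2..int N}. f i) = (\<Sum>i\<in>{1..int N}. f i)"
  proof -
    have "{1..int N} = insert 1 {2..int N}" using False by auto
    then show ?thesis by simp
  qed
  finally show ?thesis .
qed

lemma shift1m:
  fixes f :: "int \<Rightarrow> real"
  assumes "\<And>i. f (i + int N) = f i"
  shows "(\<Sum>i\<in>{1..int N}. f (i-1)) = (\<Sum>i\<in>{1..int N}. f i)"
proof -
  have "(\<Sum>i\<in>{1..int N}. (\<lambda>i. f (i-1)) (i+1)) = (\<Sum>i\<in>{1..int N}. (\<lambda>i. f (i-1)) i)"
    by (rule shift1) (metis assms diff_add_eq)
  then show ?thesis by simp
qed

definition S3 :: "nat \<Rightarrow> grid \<Rightarrow> real" where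
  "S3 N F = (\<Sum>i\<in>{1..int N}. \<Sum>j\<in>{1..int N}. \<Sum>k\<in>{1..int N}. F i j k)"

lemma S3_add: "S3 N (\<lambda>i j k. F i j k + G i j k) = S3 N F + S3 N G"
  by (simp add: S3_def sum.distrib)
lemma S3_diff: "S3 N (\<lambda>i j k. F i j k - G i j k) = S3 N F - S3 N G"
  by (simp add: S3_def sum_subtractf)
lemma S3_cmult: "S3 N (\<lambda>i j k. c * F i j k) = c * S3 N F"
  by (simp add: S3_def sum_distrib_left)
lemma S3_nonneg: "(\<And>i j k. 0 \<le> F i j k) \<Longrightarrow> 0 \<le> S3 N F"
  by (simp add: S3_def sum_nonneg)
lemma S3_cong: "(\<And>i j k. F i j k = G i j k) \<Longrightarrow> S3 N F = S3 N G"
  by (simp add: S3_def)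
lemma S3_mono: "(\<And>i j k. F i j k \<le> G i j k) \<Longrightarrow> S3 N F \<le> S3 N G"
  by (simp add: S3_def sum_mono)
lemma S3_member:
  assumes "\<And>i j k. 0 \<le> F i j k" "a \<in> {1..int N}" "b \<in> {1..int N}" "c \<in> {1..int N}"
  shows "F a b c \<le> S3 N F"
proof -
  have "F a b c \<le> (\<Sum>k\<in>{1..int N}. F a b k)"
    by (rule member_le_sum) (use assms in auto)
  also have "\<dots> \<le> (\<Sum>j\<in>{1..int N}. \<Sum>k\<in>{1..int N}. F a j k)"
    by (rule member_le_sum[where f="\<lambda>j. \<Sum>k\<in>{1..int N}. F a j k"]) (use assms in \<open>auto intro!: sum_nonneg\<close>)
  also have "\<dots> \<le> S3 N F" unfolding S3_def
    by (rule member_le_sum[where f="\<lambda>i. \<Sum>j\<in>{1..int N}. \<Sum>k\<in>{1..int N}. F i j k"]) (use assms in \<open>auto intro!: sum_nonneg\<close>)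
  finally show ?thesis .
qed

lemma tele_i:
  assumes "\<And>i j k. F (i + int N) j k = F i j k"
  shows "S3 N (\<lambda>i j k. F (i+1) j k - F i j k) = 0"
proof -
  have "(\<Sum>i\<in>{1..int N}. (\<lambda>i. \<Sum>j\<in>{1..int N}. \<Sum>k\<in>{1..int N}. F i j k) (i+1))
      = (\<Sum>i\<in>{1..int N}. (\<lambda>i. \<Sum>j\<in>{1..int N}. \<Sum>k\<in>{1..int N}. F i j k) i)"
    by (rule shift1) (simp add: assms)
  then show ?thesis by (simp add: S3_diff) (simp add: S3_def)
qed

lemma tele_j:
  assumes "\<And>i j k. F i (j + int N) k = F i j k"
  shows "S3 N (\<lambda>i j k. F i (j+1) k - F i j k) = 0"
proof -
  have "\<And>i. (\<Sum>j\<in>{1..int N}. (\<lambda>j. \<Sum>k\<in>{1..int N}. F i j k) (j+1))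
      = (\<Sum>j\<in>{1..int N}. (\<lambda>j. \<Sum>k\<in>{1..int N}. F i j k) j)"
    by (rule shift1) (simp add: assms)
  then show ?thesis by (simp add: S3_diff) (simp add: S3_def)
qed

lemma tele_k:
  assumes "\<And>i j k. F i j (k + int N) = F i j k"
  shows "S3 N (\<lambda>i j k. F i j (k+1) - F i j k) = 0"
proof -
  have "\<And>i j. (\<Sum>k\<in>{1..int N}. (\<lambda>k. F i j k) (k+1))
      = (\<Sum>k\<in>{1..int N}. (\<lambda>k. F i j k) k)"
    by (rule shift1) (simp add: assms)
  then show ?thesis by (simp add: S3_diff) (simp add: S3_def)
qed

lemma per_D:
  assumes "per N v"
  shows "v (i + int N) j k = v i j k" "v i (j + int N) k = v i j k" "v i j (k + int N) = v i j k"
    "v (i + int N - 1) j k = v (i - 1) j k" "v i (j + int N - 1) k = v i (j - 1) k"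
    "v i j (k + int N - 1) = v i j (k - 1)"
  using assms unfolding per_def
  by (simp_all add: algebra_simps) (metis add.commute add_diff_eq)+

lemma lap_nonneg:
  assumes "per N v"
  shows "0 \<le> S3 N (\<lambda>i j k. - lap h v i j k * v i j k)"
proof -
  note P = per_D[OF assms]
  define Sq where "Sq = (\<lambda>i j k. (v (i+1) j k - v i j k)^2 + (v i (j+1) k - v i j k)^2 + (v i j (k+1) - v i j k)^2)"
  define A1 where "A1 = (\<lambda>i j k. (v (i+1) j k)^2 - (v i j k)^2)"
  define A2 where "A2 = (\<lambda>i j k. v (i+1) j k * v i j k - v i j k * v (i-1) j k)"
  define B1 where "B1 = (\<lambda>i j k. (v i (j+1) k)^2 - (v i j k)^2)"
  define B2 where "B2 = (\<lambda>i j k. v i (j+1) k * v i j k - v i j k * v i (j-1) k)"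
  define C1 where "C1 = (\<lambda>i j k. (v i j (k+1))^2 - (v i j k)^2)"
  define C2 where "C2 = (\<lambda>i j k. v i j (k+1) * v i j k - v i j k * v i j (k-1))"
  define Q where "Q = (\<lambda>i j k. Sq i j k - (A1 i j k - A2 i j k) - (B1 i j k - B2 i j k) - (C1 i j k - C2 i j k))"
  have eq: "- lap h v i j k * v i j k = Q i j k / h^2" for i j k
  proof -
    have "- lap h v i j k * v i j k = (- (v (i+1) j k + v (i-1) j k + v i (j+1) k + v i (j-1) k
                       + v i j (k+1) + v i j (k-1) - 6 * v i j k) * v i j k) / h^2"
      by (simp add: lap_def minus_divide_left)
    also have "\<dots> = Q i j k / h^2"
      by (rule arg_cong[where f="\<lambda>x. x / h^2"]) (simp add: Q_def Sq_def A1_def A2_def B1_def B2_def C1_def C2_def algebra_simps power2_eq_square)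
    finally show ?thesis .
  qed
  have t1: "S3 N A1 = 0" unfolding A1_def
    using tele_i[of "\<lambda>i j k. (v i j k)^2"] P by simp
  have t2: "S3 N A2 = 0" unfolding A2_def
    using tele_i[of "\<lambda>i j k. v i j k * v (i-1) j k"] P by (simp add: mult.commute)
  have t3: "S3 N B1 = 0" unfolding B1_def
    using tele_j[of "\<lambda>i j k. (v i j k)^2"] P by simp
  have t4: "S3 N B2 = 0" unfolding B2_def
    using tele_j[of "\<lambda>i j k. v i j k * v i (j-1) k"] P by (simp add: mult.commute)
  have t5: "S3 N C1 = 0" unfolding C1_def
    using tele_k[of "\<lambda>i j k. (v i j k)^2"] P by simp
  have t6: "S3 N C2 = 0" unfolding C2_def
    using tele_k[of "\<lambda>i j k. v i j k * v i j (k-1)"] P by (simp add: mult.commute)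
  have "S3 N Q = S3 N Sq"
    unfolding Q_def by (simp only: S3_diff t1 t2 t3 t4 t5 t6) (simp?)
  also have "\<dots> \<ge> 0" by (rule S3_nonneg) (simp add: Sq_def)
  finally have "0 \<le> S3 N Q" .
  moreover have "S3 N (\<lambda>i j k. - lap h v i j k * v i j k) = S3 N Q / h^2"
  proof -
    have "S3 N (\<lambda>i j k. - lap h v i j k * v i j k) = S3 N (\<lambda>i j k. Q i j k / h^2)"
      by (rule S3_cong) (rule eq)
    also have "\<dots> = S3 N Q / h^2" by (simp add: S3_def sum_divide_distrib)
    finally show ?thesis .
  qed
  ultimately show ?thesis by simp
qed

lemma key_pt:
  fixes a1 b1 e1 f1 e2 f2 e2o f2o p q pp qq G Go al ru rw :: real
  assumes ru: "ru > 0" and rw: "rw > 0"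
    and H1: "a1 - al*f1 + p + ru*(e1 - e2o) = 0"
    and H2: "-al*e1 - b1 - q - rw*(f1 - f2o) = 0"
    and H3: "G - (1-al)*f2 - p - ru*(e1-e2) = 0"
    and H4: "-(1-al)*e2 + q + rw*(f1-f2) = 0"
    and H5: "pp = p + ru*(e1-e2)" and H6: "qq = q + rw*(f1-f2)"
    and H7: "Go - (1-al)*f2o - p = 0"
    and H8: "q = (1-al)*e2o"
  shows "ru*e2^2 + rw*f2^2 + pp^2/ru + qq^2/rw + (2*e2^2 + ru*(e1-e2)^2 + rw*(f1-f2)^2)
      + (2*a1*e1 + 2*b1*f1 + (2*G*e2 - 2*e2^2) + 2*(e2-e2o)*(G-Go) + ru*(e2-e2o)^2 + rw*(f2-f2o)^2)
    = ru*e2o^2 + rw*f2o^2 + p^2/ru + q^2/rw"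
proof -
  have f2: "f2 = f1 - (1-al)*(e2-e2o)/rw" using H4 H8 rw by (simp add: field_simps)
  have a1: "a1 = al*f1 - p - ru*(e1 - e2o)" using H1 by simp
  have b1: "b1 = -al*e1 - q - rw*(f1 - f2o)" using H2 by simp
  have G: "G = (1-al)*f2 + p + ru*(e1-e2)" using H3 by simp
  have Go: "Go = (1-al)*f2o + p" using H7 by simp
  show ?thesis unfolding a1 b1 G Go H5 H6 H8 f2 using ru rw
    by (simp add: field_simps power2_eq_square)
qed

lemma gmono:
  fixes x y :: real
  assumes "-1 < x" "x < 1" "-1 < y" "y < 1"
  shows "(x-y)^2 \<le> ((ln (1+x) - ln (1-x)) - (ln (1+y) - ln (1-y))) * (x-y)"
proof -
  have lnb: "ln a - ln b \<ge> 1 - b/a" if "a > 0" "b > 0" for a b :: real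
  proof -
    have "ln (b/a) \<le> b/a - 1" using that by (intro ln_le_minus_one) simp
    then show ?thesis using that by (simp add: ln_div)
  qed
  have main: "(x-y)^2 \<le> ((ln (1+x) - ln (1-x)) - (ln (1+y) - ln (1-y))) * (x-y)"
    if "-1 < x" "x < 1" "-1 < y" "y < 1" "y \<le> x" for x y :: real
  proof -
    have l1: "ln (1+x) - ln (1+y) \<ge> (x-y)/(1+x)"
      using lnb[of "1+x" "1+y"] that by (simp add: field_simps)
    have l2: "ln (1-y) - ln (1-x) \<ge> (x-y)/(1-y)"
      using lnb[of "1-y" "1-x"] that by (simp add: field_simps)
    have d1: "(x-y)/(1+x) \<ge> (x-y)/2" using that by (intro divide_left_mono) auto
    have d2: "(x-y)/(1-y) \<ge> (x-y)/2" using that by (intro divide_left_mono) auto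
    have "x - y \<le> (ln (1+x) - ln (1-x)) - (ln (1+y) - ln (1-y))" using order_trans[OF d1 l1] order_trans[OF d2 l2] by (smt (verit) field_sum_of_halves)
    then have "(x-y)*(x-y) \<le> ((ln (1+x) - ln (1-x)) - (ln (1+y) - ln (1-y))) * (x-y)"
      using that by (intro mult_right_mono) auto
    then show ?thesis by (simp add: power2_eq_square)
  qed
  show ?thesis
  proof (cases "y \<le> x")
    case True then show ?thesis using main assms by blast
  next
    case False
    have "(y-x)^2 \<le> ((ln (1+y) - ln (1-y)) - (ln (1+x) - ln (1-x))) * (y-x)"
      using main[of y x] assms False by auto
    then show ?thesis by (simp add: power2_commute algebra_simps)
  qed
qed

lemma per_mult:
  assumes "per N v"
  shows "v (a + int N * t) b c = v a b c \<and> v a (b + int N * t) c = v a b c \<and> v a b (c + int N * t) = v a b c"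
proof (induction t rule: int_induct[where k=0])
  case base then show ?case by simp
next
  case (step1 i)
  have e: "x + int N * (i + 1) = (x + int N * i) + int N" for x by (simp add: algebra_simps)
  show ?case using step1 per_D(1-3)[OF assms] by (simp only: e)
next
  case (step2 i)
  have e: "x + int N * i = (x + int N * (i - 1)) + int N" for x by (simp add: algebra_simps)
  show ?case using step2 per_D(1-3)[OF assms, of "a + int N * (i - 1)" b c]
     per_D(1-3)[OF assms, of a "b + int N * (i - 1)" c] per_D(1-3)[OF assms, of a b "c + int N * (i - 1)"]
    by (metis e)
qed

definition wr :: "nat \<Rightarrow> int \<Rightarrow> int" where "wr N a = (a - 1) mod int N + 1"

lemma wr_in: "N > 0 \<Longrightarrow> wr N a \<in> {1..int N}"
  unfolding wr_def by (auto simp: add_increasing pos_mod_bound) (smt (verit) of_nat_0_less_iff pos_mod_bound)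

lemma per_wrap:
  assumes "per N v"
  shows "v a b c = v (wr N a) (wr N b) (wr N c)"
proof -
  have ea: "a = wr N a + int N * ((a - 1) div int N)" for a
    unfolding wr_def by (metis add.commute diff_add_cancel mod_div_mult_eq mult.commute add.assoc)
  have "v (wr N a) (wr N b) (wr N c) = v (wr N a + int N * ((a - 1) div int N)) (wr N b) (wr N c)"
    using per_mult[OF assms] by simp
  also have "\<dots> = v a (wr N b + int N * ((b - 1) div int N)) (wr N c)"
    using per_mult[OF assms] ea[of a] by simp
  also have "\<dots> = v a b (wr N c + int N * ((c - 1) div int N))"
    using per_mult[OF assms] ea[of b] by simp
  also have "\<dots> = v a b c" using ea[of c] by simp
  finally show ?thesis ..
qed

lemma lap_diff: "lap h (\<lambda>a b c. f a b c - g a b c) a b c = lap h f a b c - lap h g a b c"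
  unfolding lap_def by (simp add: diff_divide_distrib[symmetric])

lemma gip_S3: "gip h N v x = h^2 * S3 N (\<lambda>i j k. v i j k * x i j k)"
  by (simp add: gip_def S3_def)

lemma per_diff: "per N f \<Longrightarrow> per N g \<Longrightarrow> per N (\<lambda>a b c. f a b c - g a b c)"
  unfolding per_def by simp

lemma shift2: "(\<lambda>m. f (Suc (Suc m))) \<longlonglongrightarrow> (l::real) \<Longrightarrow> f \<longlonglongrightarrow> l"
  by (rule LIMSEQ_imp_Suc, rule LIMSEQ_imp_Suc) simp

lemma sq_tend:
  fixes f W :: "nat \<Rightarrow> real"
  assumes "W \<longlonglongrightarrow> 0" "\<And>m. c * (f m)^2 \<le> W m" "c > 0"
  shows "f \<longlonglongrightarrow> 0"
proof -
  have "(\<lambda>m. sqrt (W m / c)) \<longlonglongrightarrow> sqrt (0 / c)"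
    using assms(3) by (intro tendsto_intros assms(1)) simp
  then have s: "(\<lambda>m. sqrt (W m / c)) \<longlonglongrightarrow> 0" by simp
  have "(\<lambda>m. \<bar>f m\<bar>) \<longlonglongrightarrow> 0"
  proof (rule real_tendsto_sandwich[OF _ _ tendsto_const s])
    show "\<forall>\<^sub>F m in sequentially. 0 \<le> \<bar>f m\<bar>" by simp
    show "\<forall>\<^sub>F m in sequentially. \<bar>f m\<bar> \<le> sqrt (W m / c)"
    proof (rule always_eventually, rule allI)
      fix m
      have "(f m)^2 \<le> W m / c" using assms(2)[of m] assms(3) by (simp add: field_simps)
      then have "sqrt ((f m)^2) \<le> sqrt (W m / c)" by (rule real_sqrt_le_mono)
      then show "\<bar>f m\<bar> \<le> sqrt (W m / c)" by simp
    qed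
  qed
  then show ?thesis by (simp add: tendsto_rabs_zero_iff)
qed

lemma ext_box:
  assumes "\<And>m. per N (X m)" "N > 0"
    "\<And>a b c. a \<in> {1..int N} \<Longrightarrow> b \<in> {1..int N} \<Longrightarrow> c \<in> {1..int N} \<Longrightarrow> (\<lambda>m. X m a b c) \<longlonglongrightarrow> 0"
  shows "(\<lambda>m. X m a b c) \<longlonglongrightarrow> 0"
proof -
  have "(\<lambda>m. X m a b c) = (\<lambda>m. X m (wr N a) (wr N b) (wr N c))"
    using per_wrap[OF assms(1)] by blast
  then show ?thesis using assms(3) wr_in[OF assms(2)] by simp
qed

lemma gnorm_to0:
  assumes "\<And>a b c. a \<in> {1..int N} \<Longrightarrow> b \<in> {1..int N} \<Longrightarrow> c \<in> {1..int N} \<Longrightarrow> (\<lambda>m. X m a b c) \<longlonglongrightarrow> 0"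
  shows "(\<lambda>m. gnorm h N (X m)) \<longlonglongrightarrow> 0"
proof -
  have "(\<lambda>m. S3 N (\<lambda>a b c. X m a b c * X m a b c)) \<longlonglongrightarrow> 0"
    unfolding S3_def
    by (intro tendsto_null_sum) (use assms in \<open>auto intro!: tendsto_mult_zero\<close>)
  then have "(\<lambda>m. sqrt (h^2 * S3 N (\<lambda>a b c. X m a b c * X m a b c))) \<longlonglongrightarrow> sqrt (h^2 * 0)"
    by (intro tendsto_intros)
  then show ?thesis by (simp add: gnorm_def gip_S3)
qed



theorem proposition4p3:
  fixes L eps \<theta>0 \<tau> \<alpha> \<rho>u \<rho>w h :: real and N :: nat and un :: grid
    and u1 w1 u2 w2 u3 w3 :: "nat \<Rightarrow> grid"
    and u1s w1s u2s w2s u3s w3s :: grid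
  assumes "L > 0" "N > 0" "h = L / real N" "eps > 0" "\<theta>0 > 0" "\<tau> > 0"
    "0 < \<alpha>" "\<alpha> < 1" "\<rho>u > 0" "\<rho>w > 0"
    "per N un" "\<forall>a b c. -1 < un a b c \<and> un a b c < 1"
    "algorithm1 N h eps \<theta>0 \<tau> \<alpha> \<rho>u \<rho>w un u1 w1 u2 w2 u3 w3"
    "stationary N h eps \<theta>0 \<tau> \<alpha> un u1s w1s u2s w2s u3s w3s"
  shows "(\<lambda>k. gnorm h N (\<lambda>a b c. u1 k a b c - u1s a b c)) \<longlonglongrightarrow> 0 \<and>
     (\<lambda>k. gnorm h N (\<lambda>a b c. w1 k a b c - w1s a b c)) \<longlonglongrightarrow> 0 \<and>
     (\<lambda>k. gnorm h N (\<lambda>a b c. u2 k a b c - u2s a b c)) \<longlonglongrightarrow> 0 \<and>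
     (\<lambda>k. gnorm h N (\<lambda>a b c. w2 k a b c - w2s a b c)) \<longlonglongrightarrow> 0 \<and>
     (\<lambda>k. gnorm h N (\<lambda>a b c. u3 k a b c - u3s a b c)) \<longlonglongrightarrow> 0 \<and>
     (\<lambda>k. gnorm h N (\<lambda>a b c. w3 k a b c - w3s a b c)) \<longlonglongrightarrow> 0"
proof -
  note alg = assms(13)[unfolded algorithm1_def]
  note st = assms(14)[unfolded stationary_def]
  have ru: "\<rho>u > 0" and rw: "\<rho>w > 0" and tau: "\<tau> > 0" and ep: "eps > 0" and Npos: "N > 0"
    using assms by auto
  note AK = alg[THEN conjunct2, THEN conjunct2, THEN conjunct2, THEN conjunct2, rule_format]
  have per_u1: "per N (u1 (Suc k))" for k using AK[of k] by blast
  have per_w1: "per N (w1 (Suc k))" for k using AK[of k] by blast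
  have per_u2: "per N (u2 (Suc k))" for k using AK[of k] by blast
  have per_w2: "per N (w2 (Suc k))" for k using AK[of k] by blast
  have aE1: "- (eps^2) * lap h (u1 (Suc k)) a b c - \<alpha> * w1 (Suc k) a b c + u3 k a b c
                    + \<rho>u * (u1 (Suc k) a b c - u2 k a b c) = 0" for k a b c using AK[of k] by blast
  have aE2: "\<alpha> * (- u1 (Suc k) a b c + un a b c) + \<tau> * lap h (w1 (Suc k)) a b c
                    - w3 k a b c - \<rho>w * (w1 (Suc k) a b c - w2 k a b c) = 0" for k a b c using AK[of k] by blast
  have aB: "-1 < u2 (Suc k) a b c \<and> u2 (Suc k) a b c < 1" for k a b c using AK[of k] by blast
  have aE3: "ln (1 + u2 (Suc k) a b c) - ln (1 - u2 (Suc k) a b c) - \<theta>0 * un a b c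
                    - (1 - \<alpha>) * w2 (Suc k) a b c - u3 k a b c
                    - \<rho>u * (u1 (Suc k) a b c - u2 (Suc k) a b c) = 0" for k a b c using AK[of k] by blast
  have aE4: "(1 - \<alpha>) * (- u2 (Suc k) a b c + un a b c) + w3 k a b c
                    + \<rho>w * (w1 (Suc k) a b c - w2 (Suc k) a b c) = 0" for k a b c using AK[of k] by blast
  have aU: "u3 (Suc k) a b c = u3 k a b c + \<rho>u * (u1 (Suc k) a b c - u2 (Suc k) a b c)" for k a b c
    using AK[of k] by simp
  have aW: "w3 (Suc k) a b c = w3 k a b c + \<rho>w * (w1 (Suc k) a b c - w2 (Suc k) a b c)" for k a b c
    using AK[of k] by simp
  have sper: "per N u1s" "per N w1s" "per N u2s" "per N w2s" using st by blast+
  have sB: "-1 < u2s a b c \<and> u2s a b c < 1" for a b c using st by blast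
  have sE1: "- (eps^2) * lap h u1s a b c - \<alpha> * w1s a b c + u3s a b c = 0" for a b c using st by blast
  have sE2: "\<alpha> * (- u1s a b c + un a b c) + \<tau> * lap h w1s a b c - w3s a b c = 0" for a b c using st by blast
  have sE3: "ln (1 + u2s a b c) - ln (1 - u2s a b c) - \<theta>0 * un a b c
               - (1 - \<alpha>) * w2s a b c - u3s a b c = 0" for a b c using st by blast
  have sE4: "(1 - \<alpha>) * (- u2s a b c + un a b c) + w3s a b c = 0" for a b c using st by blast
  have seq: "u1s = u2s" "w1s = w2s" using st by blast+
  define E1 where "E1 = (\<lambda>n a b c. u1 n a b c - u1s a b c)"
  define F1 where "F1 = (\<lambda>n a b c. w1 n a b c - w1s a b c)"
  define E2 where "E2 = (\<lambda>n a b c. u2 n a b c - u2s a b c)"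
  define F2 where "F2 = (\<lambda>n a b c. w2 n a b c - w2s a b c)"
  define P where "P = (\<lambda>n a b c. u3 n a b c - u3s a b c)"
  define Q where "Q = (\<lambda>n a b c. w3 n a b c - w3s a b c)"
  define g where "g = (\<lambda>x::real. ln (1+x) - ln (1-x))"
  define GG where "GG = (\<lambda>n a b c. g (u2 n a b c) - g (u2s a b c))"
  have H1: "-(eps^2) * lap h (E1 (Suc k)) a b c - \<alpha>*F1 (Suc k) a b c + P k a b c + \<rho>u*(E1 (Suc k) a b c - E2 k a b c) = 0" for k a b c
  proof -
    have "-(eps^2) * lap h (E1 (Suc k)) a b c - \<alpha>*F1 (Suc k) a b c + P k a b c + \<rho>u*(E1 (Suc k) a b c - E2 k a b c)
      = (- (eps^2) * lap h (u1 (Suc k)) a b c - \<alpha> * w1 (Suc k) a b c + u3 k a b c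
                    + \<rho>u * (u1 (Suc k) a b c - u2 k a b c)) - (- (eps^2) * lap h u1s a b c - \<alpha> * w1s a b c + u3s a b c)"
      unfolding E1_def F1_def P_def E2_def lap_diff by (simp add: seq algebra_simps)
    then show ?thesis using aE1[of k a b c] sE1[of a b c] by simp
  qed
  have H2: "-\<alpha>*E1 (Suc k) a b c - (-\<tau> * lap h (F1 (Suc k)) a b c) - Q k a b c - \<rho>w*(F1 (Suc k) a b c - F2 k a b c) = 0" for k a b c
  proof -
    have "-\<alpha>*E1 (Suc k) a b c - (-\<tau> * lap h (F1 (Suc k)) a b c) - Q k a b c - \<rho>w*(F1 (Suc k) a b c - F2 k a b c)
      = (\<alpha> * (- u1 (Suc k) a b c + un a b c) + \<tau> * lap h (w1 (Suc k)) a b c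
                    - w3 k a b c - \<rho>w * (w1 (Suc k) a b c - w2 k a b c)) - (\<alpha> * (- u1s a b c + un a b c) + \<tau> * lap h w1s a b c - w3s a b c)"
      unfolding E1_def F1_def Q_def F2_def lap_diff by (simp add: seq algebra_simps)
    then show ?thesis using aE2[of k a b c] sE2[of a b c] by simp
  qed
  have H3: "GG (Suc k) a b c - (1-\<alpha>)*F2 (Suc k) a b c - P k a b c - \<rho>u*(E1 (Suc k) a b c - E2 (Suc k) a b c) = 0" for k a b c
  proof -
    have "GG (Suc k) a b c - (1-\<alpha>)*F2 (Suc k) a b c - P k a b c - \<rho>u*(E1 (Suc k) a b c - E2 (Suc k) a b c)
      = (ln (1 + u2 (Suc k) a b c) - ln (1 - u2 (Suc k) a b c) - \<theta>0 * un a b c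
                    - (1 - \<alpha>) * w2 (Suc k) a b c - u3 k a b c
                    - \<rho>u * (u1 (Suc k) a b c - u2 (Suc k) a b c)) - (ln (1 + u2s a b c) - ln (1 - u2s a b c) - \<theta>0 * un a b c
               - (1 - \<alpha>) * w2s a b c - u3s a b c)"
      unfolding GG_def g_def F2_def P_def E1_def E2_def by (simp add: seq algebra_simps)
    then show ?thesis using aE3[of k a b c] sE3[of a b c] by simp
  qed
  have H4: "-(1-\<alpha>)*E2 (Suc k) a b c + Q k a b c + \<rho>w*(F1 (Suc k) a b c - F2 (Suc k) a b c) = 0" for k a b c
  proof -
    have "-(1-\<alpha>)*E2 (Suc k) a b c + Q k a b c + \<rho>w*(F1 (Suc k) a b c - F2 (Suc k) a b c)
      = ((1 - \<alpha>) * (- u2 (Suc k) a b c + un a b c) + w3 k a b c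
                    + \<rho>w * (w1 (Suc k) a b c - w2 (Suc k) a b c)) - ((1 - \<alpha>) * (- u2s a b c + un a b c) + w3s a b c)"
      unfolding E2_def Q_def F1_def F2_def by (simp add: seq algebra_simps)
    then show ?thesis using aE4[of k a b c] sE4[of a b c] by simp
  qed
  have H5: "P (Suc k) a b c = P k a b c + \<rho>u*(E1 (Suc k) a b c - E2 (Suc k) a b c)" for k a b c
    unfolding P_def E1_def E2_def using aU[of k a b c] by (simp add: seq)
  have H6: "Q (Suc k) a b c = Q k a b c + \<rho>w*(F1 (Suc k) a b c - F2 (Suc k) a b c)" for k a b c
    unfolding Q_def F1_def F2_def using aW[of k a b c] by (simp add: seq)
  have H7: "GG (Suc k) a b c - (1-\<alpha>)*F2 (Suc k) a b c - P (Suc k) a b c = 0" for k a b c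
    using H3[of k a b c] H5[of k a b c] by simp
  have H8: "Q (Suc k) a b c = (1-\<alpha>)*E2 (Suc k) a b c" for k a b c
    using H4[of k a b c] H6[of k a b c] by (simp add: algebra_simps)
  define Vt where "Vt = (\<lambda>n a b c. \<rho>u*(E2 n a b c)^2 + \<rho>w*(F2 n a b c)^2 + (P n a b c)^2/\<rho>u + (Q n a b c)^2/\<rho>w)"
  define V where "V = (\<lambda>n. S3 N (Vt n))"
  define W where "W = (\<lambda>n a b c. 2*(E2 n a b c)^2 + \<rho>u*(E1 n a b c - E2 n a b c)^2 + \<rho>w*(F1 n a b c - F2 n a b c)^2)"
  define R2 where "R2 = (\<lambda>m a b c. (2*GG (Suc (Suc m)) a b c * E2 (Suc (Suc m)) a b c - 2*(E2 (Suc (Suc m)) a b c)^2)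
     + 2*(E2 (Suc (Suc m)) a b c - E2 (Suc m) a b c)*(GG (Suc (Suc m)) a b c - GG (Suc m) a b c)
     + \<rho>u*(E2 (Suc (Suc m)) a b c - E2 (Suc m) a b c)^2 + \<rho>w*(F2 (Suc (Suc m)) a b c - F2 (Suc m) a b c)^2)"
  define T where "T = (\<lambda>m a b c. (2*eps^2) * (- lap h (E1 (Suc (Suc m))) a b c * E1 (Suc (Suc m)) a b c)
     + (2*\<tau>) * (- lap h (F1 (Suc (Suc m))) a b c * F1 (Suc (Suc m)) a b c) + R2 m a b c)"
  have KP: "Vt (Suc (Suc m)) a b c + W (Suc (Suc m)) a b c + T m a b c = Vt (Suc m) a b c" for m a b c
  proof -
    have k: "\<rho>u*(E2 (Suc (Suc m)) a b c)^2 + \<rho>w*(F2 (Suc (Suc m)) a b c)^2 + (P (Suc (Suc m)) a b c)^2/\<rho>u + (Q (Suc (Suc m)) a b c)^2/\<rho>w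
      + (2*(E2 (Suc (Suc m)) a b c)^2 + \<rho>u*(E1 (Suc (Suc m)) a b c-E2 (Suc (Suc m)) a b c)^2 + \<rho>w*(F1 (Suc (Suc m)) a b c-F2 (Suc (Suc m)) a b c)^2)
      + (2*(-(eps^2) * lap h (E1 (Suc (Suc m))) a b c)*E1 (Suc (Suc m)) a b c + 2*(-\<tau> * lap h (F1 (Suc (Suc m))) a b c)*F1 (Suc (Suc m)) a b c
         + (2*GG (Suc (Suc m)) a b c*E2 (Suc (Suc m)) a b c - 2*(E2 (Suc (Suc m)) a b c)^2)
         + 2*(E2 (Suc (Suc m)) a b c-E2 (Suc m) a b c)*(GG (Suc (Suc m)) a b c-GG (Suc m) a b c)
         + \<rho>u*(E2 (Suc (Suc m)) a b c-E2 (Suc m) a b c)^2 + \<rho>w*(F2 (Suc (Suc m)) a b c-F2 (Suc m) a b c)^2)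
      = \<rho>u*(E2 (Suc m) a b c)^2 + \<rho>w*(F2 (Suc m) a b c)^2 + (P (Suc m) a b c)^2/\<rho>u + (Q (Suc m) a b c)^2/\<rho>w"
      by (rule key_pt[OF ru rw H1[of "Suc m" a b c] H2[of "Suc m" a b c] H3[of "Suc m" a b c] H4[of "Suc m" a b c]
            H5[of "Suc m" a b c] H6[of "Suc m" a b c] H7[of m a b c] H8[of m a b c]])
    show ?thesis unfolding Vt_def W_def T_def R2_def using k by (simp add: algebra_simps)
  qed
  have R2nn: "0 \<le> R2 m a b c" for m a b c
  proof -
    have g1: "(E2 (Suc (Suc m)) a b c)^2 \<le> GG (Suc (Suc m)) a b c * E2 (Suc (Suc m)) a b c"
      using gmono[of "u2 (Suc (Suc m)) a b c" "u2s a b c"] aB[of "Suc m" a b c] sB[of a b c]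
      unfolding GG_def g_def E2_def by simp
    have g2: "(u2 (Suc (Suc m)) a b c - u2 (Suc m) a b c)^2 \<le> (g (u2 (Suc (Suc m)) a b c) - g (u2 (Suc m) a b c)) * (u2 (Suc (Suc m)) a b c - u2 (Suc m) a b c)"
      using gmono[of "u2 (Suc (Suc m)) a b c" "u2 (Suc m) a b c"] aB[of "Suc m" a b c] aB[of m a b c]
      unfolding g_def by simp
    have eq: "(E2 (Suc (Suc m)) a b c - E2 (Suc m) a b c) * (GG (Suc (Suc m)) a b c - GG (Suc m) a b c)
      = (g (u2 (Suc (Suc m)) a b c) - g (u2 (Suc m) a b c)) * (u2 (Suc (Suc m)) a b c - u2 (Suc m) a b c)"
      unfolding E2_def GG_def by (simp add: mult.commute)
    have g3: "0 \<le> (E2 (Suc (Suc m)) a b c - E2 (Suc m) a b c) * (GG (Suc (Suc m)) a b c - GG (Suc m) a b c)"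
      unfolding eq by (rule order_trans[OF zero_le_power2 g2])
    have t1: "0 \<le> 2*GG (Suc (Suc m)) a b c * E2 (Suc (Suc m)) a b c - 2*(E2 (Suc (Suc m)) a b c)^2" using g1 by simp
    have t2: "0 \<le> 2*(E2 (Suc (Suc m)) a b c - E2 (Suc m) a b c)*(GG (Suc (Suc m)) a b c - GG (Suc m) a b c)"
      using g3 by (simp only: mult.assoc)
    have t3: "0 \<le> \<rho>u*(E2 (Suc (Suc m)) a b c - E2 (Suc m) a b c)^2" using ru by simp
    have t4: "0 \<le> \<rho>w*(F2 (Suc (Suc m)) a b c - F2 (Suc m) a b c)^2" using rw by simp
    show ?thesis unfolding R2_def by (intro add_nonneg_nonneg t1 t2 t3 t4)
  qed
  have Tnn: "0 \<le> S3 N (T m)" for m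
  proof -
    have pe1: "per N (E1 (Suc (Suc m)))" unfolding E1_def using per_diff[OF per_u1 sper(1)] by simp
    have pf1: "per N (F1 (Suc (Suc m)))" unfolding F1_def using per_diff[OF per_w1 sper(2)] by simp
    have "S3 N (T m) = (2*eps^2) * S3 N (\<lambda>a b c. - lap h (E1 (Suc (Suc m))) a b c * E1 (Suc (Suc m)) a b c)
       + (2*\<tau>) * S3 N (\<lambda>a b c. - lap h (F1 (Suc (Suc m))) a b c * F1 (Suc (Suc m)) a b c) + S3 N (R2 m)"
      unfolding T_def by (simp only: S3_add S3_cmult)
    moreover have "0 \<le> S3 N (R2 m)" by (rule S3_nonneg) (rule R2nn)
    moreover note lap_nonneg[OF pe1, of h] lap_nonneg[OF pf1, of h]
    ultimately show ?thesis using tau by simp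
  qed
  have dec: "V (Suc (Suc m)) + S3 N (W (Suc (Suc m))) \<le> V (Suc m)" for m
  proof -
    have "V (Suc m) = S3 N (\<lambda>a b c. Vt (Suc (Suc m)) a b c + W (Suc (Suc m)) a b c + T m a b c)"
      unfolding V_def by (rule S3_cong) (simp add: KP)
    also have "\<dots> = V (Suc (Suc m)) + S3 N (W (Suc (Suc m))) + S3 N (T m)"
      unfolding V_def by (simp only: S3_add)
    finally show ?thesis using Tnn[of m] by simp
  qed
  have Vnn: "0 \<le> V n" for n
    unfolding V_def Vt_def by (rule S3_nonneg) (use ru rw in \<open>intro add_nonneg_nonneg, auto\<close>)
  have Wnn: "0 \<le> W n a b c" for n a b c
    unfolding W_def by (use ru rw in \<open>intro add_nonneg_nonneg, auto\<close>)
  have SWnn: "0 \<le> S3 N (W n)" for n by (rule S3_nonneg) (rule Wnn)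
  have "decseq (\<lambda>m. V (Suc m))"
    by (rule decseq_SucI) (use dec SWnn in \<open>smt (verit)\<close>)
  then obtain LV where LV: "(\<lambda>m. V (Suc m)) \<longlonglongrightarrow> LV"
    using decseq_convergent[of "\<lambda>m. V (Suc m)" 0] Vnn by blast
  have "(\<lambda>m. V (Suc m) - V (Suc (Suc m))) \<longlonglongrightarrow> LV - LV"
    by (intro tendsto_diff LV LIMSEQ_Suc[OF LV])
  then have Vd: "(\<lambda>m. V (Suc m) - V (Suc (Suc m))) \<longlonglongrightarrow> 0" by simp
  have SW: "(\<lambda>m. S3 N (W (Suc (Suc m)))) \<longlonglongrightarrow> 0"
    by (rule real_tendsto_sandwich[OF _ _ tendsto_const Vd])
       (use SWnn dec in \<open>auto intro!: always_eventually simp: algebra_simps\<close>)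
  have Wpt: "(\<lambda>m. W (Suc (Suc m)) a b c) \<longlonglongrightarrow> 0"
    if box: "a \<in> {1..int N}" "b \<in> {1..int N}" "c \<in> {1..int N}" for a b c
    by (rule real_tendsto_sandwich[OF _ _ tendsto_const SW])
       (use Wnn S3_member[OF Wnn box] in \<open>auto intro!: always_eventually\<close>)
  have e2c: "(\<lambda>m. E2 (Suc (Suc m)) a b c) \<longlonglongrightarrow> 0"
    if box: "a \<in> {1..int N}" "b \<in> {1..int N}" "c \<in> {1..int N}" for a b c
    by (rule sq_tend[OF Wpt[OF box], where c=2]) (use ru rw in \<open>auto simp: W_def\<close>)
  have d1c: "(\<lambda>m. E1 (Suc (Suc m)) a b c - E2 (Suc (Suc m)) a b c) \<longlonglongrightarrow> 0"
    if box: "a \<in> {1..int N}" "b \<in> {1..int N}" "c \<in> {1..int N}" for a b c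
    by (rule sq_tend[OF Wpt[OF box], where c="\<rho>u"]) (use ru rw in \<open>auto simp: W_def\<close>)
  have d2c: "(\<lambda>m. F1 (Suc (Suc m)) a b c - F2 (Suc (Suc m)) a b c) \<longlonglongrightarrow> 0"
    if box: "a \<in> {1..int N}" "b \<in> {1..int N}" "c \<in> {1..int N}" for a b c
    by (rule sq_tend[OF Wpt[OF box], where c="\<rho>w"]) (use ru rw in \<open>auto simp: W_def\<close>)
  have e1c: "(\<lambda>m. E1 (Suc (Suc m)) a b c) \<longlonglongrightarrow> 0"
    if box: "a \<in> {1..int N}" "b \<in> {1..int N}" "c \<in> {1..int N}" for a b c
  proof -
    have "(\<lambda>m. E2 (Suc (Suc m)) a b c + (E1 (Suc (Suc m)) a b c - E2 (Suc (Suc m)) a b c)) \<longlonglongrightarrow> 0 + 0"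
      by (intro tendsto_add e2c d1c box)
    then show ?thesis by simp
  qed
  have e1all: "(\<lambda>m. E1 (Suc (Suc m)) a b c) \<longlonglongrightarrow> 0" for a b c
  proof (rule ext_box[where X="\<lambda>m. E1 (Suc (Suc m))", OF _ Npos])
    show "per N (E1 (Suc (Suc m)))" for m unfolding E1_def using per_diff[OF per_u1 sper(1)] by simp
  qed (rule e1c)
  have hne: "h \<noteq> 0" using assms(1,2,3) by simp
  have lapc: "(\<lambda>m. lap h (E1 (Suc (Suc m))) a b c) \<longlonglongrightarrow> 0" for a b c
  proof -
    have "(\<lambda>m. lap h (E1 (Suc (Suc m))) a b c) \<longlonglongrightarrow> (0+0+0+0+0+0 - 6*0)/h^2"
      unfolding lap_def using hne by (intro tendsto_intros e1all) simp
    then show ?thesis by simp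
  qed
  have e2o: "(\<lambda>m. E2 (Suc m) a b c) \<longlonglongrightarrow> 0"
    if box: "a \<in> {1..int N}" "b \<in> {1..int N}" "c \<in> {1..int N}" for a b c
    by (rule LIMSEQ_imp_Suc[where f="\<lambda>m. E2 (Suc m) a b c"]) (use e2c[OF box] in simp)
  have Gc: "(\<lambda>m. GG (Suc (Suc m)) a b c) \<longlonglongrightarrow> 0"
    if box: "a \<in> {1..int N}" "b \<in> {1..int N}" "c \<in> {1..int N}" for a b c
  proof -
    have "(\<lambda>m. u2s a b c + E2 (Suc (Suc m)) a b c) \<longlonglongrightarrow> u2s a b c + 0"
      by (intro tendsto_intros e2c box)
    then have u: "(\<lambda>m. u2 (Suc (Suc m)) a b c) \<longlonglongrightarrow> u2s a b c" by (simp add: E2_def)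
    have "(\<lambda>m. (ln (1 + u2 (Suc (Suc m)) a b c) - ln (1 - u2 (Suc (Suc m)) a b c)) - g (u2s a b c))
       \<longlonglongrightarrow> (ln (1 + u2s a b c) - ln (1 - u2s a b c)) - g (u2s a b c)"
      using sB[of a b c] by (intro tendsto_intros u) auto
    then show ?thesis by (simp add: GG_def g_def)
  qed
  define X where "X = (\<lambda>m a b c. \<alpha> * F1 (Suc (Suc m)) a b c + (1-\<alpha>) * F2 (Suc (Suc m)) a b c)"
  have Xeq: "X m a b c = -(eps^2) * lap h (E1 (Suc (Suc m))) a b c + GG (Suc (Suc m)) a b c
       + \<rho>u * (E2 (Suc (Suc m)) a b c - E2 (Suc m) a b c)" for m a b c
    using H1[of "Suc m" a b c] H3[of "Suc m" a b c] unfolding X_def by (simp add: algebra_simps)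
  have Xc: "(\<lambda>m. X m a b c) \<longlonglongrightarrow> 0"
    if box: "a \<in> {1..int N}" "b \<in> {1..int N}" "c \<in> {1..int N}" for a b c
  proof -
    have "(\<lambda>m. -(eps^2) * lap h (E1 (Suc (Suc m))) a b c + GG (Suc (Suc m)) a b c
       + \<rho>u * (E2 (Suc (Suc m)) a b c - E2 (Suc m) a b c)) \<longlonglongrightarrow> -(eps^2) * 0 + 0 + \<rho>u * (0 - 0)"
      by (intro tendsto_intros lapc Gc e2c e2o box)
    then show ?thesis by (simp add: Xeq)
  qed
  have f1c: "(\<lambda>m. F1 (Suc (Suc m)) a b c) \<longlonglongrightarrow> 0"
    if box: "a \<in> {1..int N}" "b \<in> {1..int N}" "c \<in> {1..int N}" for a b c
  proof -
    have "(\<lambda>m. X m a b c + (1-\<alpha>) * (F1 (Suc (Suc m)) a b c - F2 (Suc (Suc m)) a b c)) \<longlonglongrightarrow> 0 + (1-\<alpha>) * 0"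
      by (intro tendsto_intros Xc d2c box)
    then show ?thesis by (simp add: X_def algebra_simps)
  qed
  have f2c: "(\<lambda>m. F2 (Suc (Suc m)) a b c) \<longlonglongrightarrow> 0"
    if box: "a \<in> {1..int N}" "b \<in> {1..int N}" "c \<in> {1..int N}" for a b c
  proof -
    have "(\<lambda>m. X m a b c - \<alpha> * (F1 (Suc (Suc m)) a b c - F2 (Suc (Suc m)) a b c)) \<longlonglongrightarrow> 0 - \<alpha> * 0"
      by (intro tendsto_intros Xc d2c box)
    then show ?thesis by (simp add: X_def algebra_simps)
  qed
  have pc: "(\<lambda>m. P (Suc (Suc m)) a b c) \<longlonglongrightarrow> 0"
    if box: "a \<in> {1..int N}" "b \<in> {1..int N}" "c \<in> {1..int N}" for a b c
  proof -
    have "(\<lambda>m. GG (Suc (Suc m)) a b c - (1-\<alpha>) * F2 (Suc (Suc m)) a b c) \<longlonglongrightarrow> 0 - (1-\<alpha>) * 0"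
      by (intro tendsto_intros Gc f2c box)
    moreover have "GG (Suc (Suc m)) a b c - (1-\<alpha>) * F2 (Suc (Suc m)) a b c = P (Suc (Suc m)) a b c" for m
      using H7[of "Suc m" a b c] by simp
    ultimately show ?thesis by simp
  qed
  have qc: "(\<lambda>m. Q (Suc (Suc m)) a b c) \<longlonglongrightarrow> 0"
    if box: "a \<in> {1..int N}" "b \<in> {1..int N}" "c \<in> {1..int N}" for a b c
  proof -
    have "(\<lambda>m. (1-\<alpha>) * E2 (Suc (Suc m)) a b c) \<longlonglongrightarrow> (1-\<alpha>) * 0"
      by (intro tendsto_intros e2c box)
    then show ?thesis by (simp add: H8)
  qed
  have c1: "(\<lambda>k. gnorm h N (E1 k)) \<longlonglongrightarrow> 0" by (rule shift2, rule gnorm_to0, rule e1c) auto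
  have c2: "(\<lambda>k. gnorm h N (F1 k)) \<longlonglongrightarrow> 0" by (rule shift2, rule gnorm_to0, rule f1c) auto
  have c3: "(\<lambda>k. gnorm h N (E2 k)) \<longlonglongrightarrow> 0" by (rule shift2, rule gnorm_to0, rule e2c) auto
  have c4: "(\<lambda>k. gnorm h N (F2 k)) \<longlonglongrightarrow> 0" by (rule shift2, rule gnorm_to0, rule f2c) auto
  have c5: "(\<lambda>k. gnorm h N (P k)) \<longlonglongrightarrow> 0" by (rule shift2, rule gnorm_to0, rule pc) auto
  have c6: "(\<lambda>k. gnorm h N (Q k)) \<longlonglongrightarrow> 0" by (rule shift2, rule gnorm_to0, rule qc) auto
  show ?thesis using c1 c2 c3 c4 c5 c6 unfolding E1_def F1_def E2_def F2_def P_def Q_def by blast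
qed
end
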